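(* Let $H$ be a real Hilbert space with inner product $\langle\cdot,\cdot\rangle$, let $\mathcal{I}$ be a finite index set, and let $J, g_i : H\to\mathbb{R}$ ($i\in\mathcal{I}$) be $\mathcal{C}^1$ functions. Consider the problem of minimizing $J(u)$ subject to $g_i(u)\le 0$ for all $i\in\mathcal{I}$, with feasible set $\Omega=\{u\in H: g_i(u)\le 0\ \forall i\in\mathcal{I}\}$. Assume that for every $u\in\Omega$ with $I_A(u)\neq\emptyset$ the vectors $\{g_i'(u): i\in I_A(u)\}$ are linearly independent. Then a point $u\in\Omega$ is a KKT point of this problem if and only if $d_A(u)=0$.
   Context: $J'(u)$ and $g_i'(u)$ denote gradients (elements of $H$). For $u\in\Omega$, the active index set is $I_A(u)=\{i\in\mathcal{I}: g_i(u)=0\}$, and $C_A(u)=\{\sum_{i\in I_A(u)} a_i g_i'(u): a_i\ge 0\}$ is the polyhedral cone generated by the active gradients ($C_A(u)=\{0\}$ if $I_A(u)=\emptyset$). For a closed convex set $C\subset H$, $\mathbb{P}_C(v)$ denotes the metric projection of $v$ onto $C$. The correctable steepest descent direction is $d_A(u)=-J'(u)-\mathbb{P}_{C_A(u)}(-J'(u))$. A point $u\in\Omega$ is a KKT point if there exist $\mu_i\ge 0$ ($i\in\mathcal{I}$) with $-J'(u)=\sum_{i\in\mathcal{I}}\mu_i g_i'(u)$ and $\mu_i g_i(u)=0$ for all $i\in\mathcal{I}$. *)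

theory Defs
  imports "HOL-Analysis.Analysis"
begin

text \<open>A real Hilbert space is modelled by a type of class real_inner and complete_space.\<close>

definition C1_grad :: "('a::real_inner \<Rightarrow> real) \<Rightarrow> ('a \<Rightarrow> 'a) \<Rightarrow> bool" where
  "C1_grad f f' \<longleftrightarrow> (\<forall>u. (f has_derivative (\<lambda>h. f' u \<bullet> h)) (at u)) \<and> continuous_on UNIV f'"

definition proj :: "'a::real_inner set \<Rightarrow> 'a \<Rightarrow> 'a" where
  "proj C v = (THE p. p \<in> C \<and> (\<forall>c\<in>C. norm (v - p) \<le> norm (v - c)))"

definition feasible :: "'i set \<Rightarrow> ('i \<Rightarrow> 'a \<Rightarrow> real) \<Rightarrow> 'a set" where
  "feasible I g = {u. \<forall>i\<in>I. g i u \<le> 0}"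

definition active :: "'i set \<Rightarrow> ('i \<Rightarrow> 'a \<Rightarrow> real) \<Rightarrow> 'a \<Rightarrow> 'i set" where
  "active I g u = {i\<in>I. g i u = 0}"

definition active_cone :: "'i set \<Rightarrow> ('i \<Rightarrow> 'a \<Rightarrow> real) \<Rightarrow> ('i \<Rightarrow> 'a \<Rightarrow> 'a::real_vector) \<Rightarrow> 'a \<Rightarrow> 'a set" where
  "active_cone I g g' u =
     {(\<Sum>i\<in>active I g u. a i *\<^sub>R g' i u) | a. \<forall>i\<in>active I g u. a i \<ge> 0}"

definition dA :: "'i set \<Rightarrow> ('a \<Rightarrow> 'a) \<Rightarrow> ('i \<Rightarrow> 'a \<Rightarrow> real) \<Rightarrow> ('i \<Rightarrow> 'a \<Rightarrow> 'a::real_inner) \<Rightarrow> 'a \<Rightarrow> 'a" where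
  "dA I J' g g' u = - J' u - proj (active_cone I g g' u) (- J' u)"

definition KKT_point :: "'i set \<Rightarrow> ('a \<Rightarrow> 'a) \<Rightarrow> ('i \<Rightarrow> 'a \<Rightarrow> real) \<Rightarrow> ('i \<Rightarrow> 'a \<Rightarrow> 'a::real_vector) \<Rightarrow> 'a \<Rightarrow> bool" where
  "KKT_point I J' g g' u \<longleftrightarrow> u \<in> feasible I g \<and>
     (\<exists>\<mu>. (\<forall>i\<in>I. \<mu> i \<ge> 0) \<and> - J' u = (\<Sum>i\<in>I. \<mu> i *\<^sub>R g' i u) \<and> (\<forall>i\<in>I. \<mu> i * g i u = 0))"

end

theory Submission imports Defs begin

lemma compact_box:
  fixes K :: "'i \<Rightarrow> real set"
  assumes "\<And>i. compact (K i)"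
  shows "compact (Pi UNIV K)"
proof -
  have "compactin (product_topology (\<lambda>_. euclidean) UNIV) (PiE UNIV K)"
    using assms by (simp add: compactin_PiE)
  then show ?thesis by (simp add: euclidean_product_topology PiE_UNIV_domain)
qed

lemma coeff_bound:
  fixes w :: "'i \<Rightarrow> 'a::real_normed_vector"
  assumes fin: "finite A" and ne: "A \<noteq> {}" and inj: "inj_on w A" and ind: "independent (w ` A)"
  shows "\<exists>c>0. \<forall>a. c * (\<Sum>i\<in>A. \<bar>a i\<bar>) \<le> norm (\<Sum>i\<in>A. a i *\<^sub>R w i)"
proof -
  define K1 where "K1 = (\<lambda>i. if i \<in> A then {-1..1::real} else {0})"
  define S where "S = Pi UNIV K1 \<inter> {a. (\<Sum>i\<in>A. \<bar>a i\<bar>) = 1}"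
  have c1: "compact (Pi UNIV K1)" by (rule compact_box) (simp add: K1_def)
  have cl: "closed {a::'i\<Rightarrow>real. (\<Sum>i\<in>A. \<bar>a i\<bar>) = 1}"
    by (intro closed_Collect_eq continuous_intros continuous_on_product_coordinates)
  have cS: "compact S" unfolding S_def using c1 cl by (rule compact_Int_closed)
  from ne obtain i0 where i0: "i0 \<in> A" by auto
  have "(\<lambda>i. if i = i0 then 1 else 0) \<in> S"
    using i0 fin by (auto simp: S_def K1_def if_distrib sum.delta cong: if_cong)
  then have neS: "S \<noteq> {}" by auto
  have cont: "continuous_on S (\<lambda>a. norm (\<Sum>i\<in>A. a i *\<^sub>R w i))"
    by (intro continuous_intros continuous_on_subset[OF continuous_on_product_coordinates]) auto
  obtain a0 where a0: "a0 \<in> S" and amin: "\<And>b. b \<in> S \<Longrightarrow> norm (\<Sum>i\<in>A. a0 i *\<^sub>R w i) \<le> norm (\<Sum>i\<in>A. b i *\<^sub>R w i)"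
    using continuous_attains_inf[OF cS neS cont] by blast
  define c where "c = norm (\<Sum>i\<in>A. a0 i *\<^sub>R w i)"
  have "c > 0"
  proof (rule ccontr)
    assume "\<not> c > 0"
    then have z: "(\<Sum>i\<in>A. a0 i *\<^sub>R w i) = 0" by (simp add: c_def)
    define u where "u = (\<lambda>x. a0 (the_inv_into A w x))"
    have "(\<Sum>x\<in>w ` A. u x *\<^sub>R x) = (\<Sum>i\<in>A. a0 i *\<^sub>R w i)"
      by (simp add: sum.reindex[OF inj] u_def the_inv_into_f_f[OF inj])
    with z have "\<And>i. i \<in> A \<Longrightarrow> u (w i) = 0"
      using real_vector.independentD[OF ind, of "w ` A" u] fin by auto
    then have "\<And>i. i \<in> A \<Longrightarrow> a0 i = 0" by (simp add: u_def the_inv_into_f_f[OF inj])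
    then have "(\<Sum>i\<in>A. \<bar>a0 i\<bar>) = 0" by simp
    with a0 show False by (simp add: S_def)
  qed
  moreover have "c * (\<Sum>i\<in>A. \<bar>a i\<bar>) \<le> norm (\<Sum>i\<in>A. a i *\<^sub>R w i)" for a
  proof (cases "(\<Sum>i\<in>A. \<bar>a i\<bar>) = 0")
    case True then show ?thesis by simp
  next
    case False
    define s where "s = (\<Sum>i\<in>A. \<bar>a i\<bar>)"
    have spos: "s > 0" using False by (simp add: s_def sum_nonneg order_le_neq_trans)
    define b where "b = (\<lambda>i. if i \<in> A then a i / s else 0)"
    have sb: "(\<Sum>i\<in>A. \<bar>b i\<bar>) = 1"
    proof -
      have "(\<Sum>i\<in>A. \<bar>b i\<bar>) = (\<Sum>i\<in>A. \<bar>a i\<bar> / s)" using spos by (intro sum.cong) (auto simp: b_def)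
      also have "\<dots> = 1" using spos by (simp add: sum_divide_distrib[symmetric] s_def)
      finally show ?thesis .
    qed
    have "b \<in> S"
    proof -
      have "\<bar>b i\<bar> \<le> 1" if "i \<in> A" for i
        using member_le_sum[of i A "\<lambda>i. \<bar>b i\<bar>"] that fin sb by auto
      then have "-1 \<le> b i \<and> b i \<le> 1" if "i \<in> A" for i using that by (simp add: abs_le_iff)
      then show ?thesis using sb by (auto simp: S_def K1_def b_def split: if_splits)
    qed
    then have "c \<le> norm (\<Sum>i\<in>A. b i *\<^sub>R w i)" using amin c_def by auto
    also have "(\<Sum>i\<in>A. b i *\<^sub>R w i) = (1/s) *\<^sub>R (\<Sum>i\<in>A. a i *\<^sub>R w i)"
      by (simp add: scaleR_sum_right b_def divide_inverse mult.commute)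
    finally have "c \<le> norm (\<Sum>i\<in>A. a i *\<^sub>R w i) / s" using spos by simp
    then show ?thesis using spos by (simp add: s_def[symmetric] field_simps mult.commute)
  qed
  ultimately show ?thesis by blast
qed

lemma nearest_exists:
  fixes w :: "'i \<Rightarrow> 'a::real_normed_vector"
  assumes fin: "finite A" and ne: "A \<noteq> {}" and inj: "inj_on w A" and ind: "independent (w ` A)"
  defines "C \<equiv> {(\<Sum>i\<in>A. a i *\<^sub>R w i) | a. \<forall>i\<in>A. a i \<ge> 0}"
  shows "\<exists>p\<in>C. \<forall>c\<in>C. norm (v - p) \<le> norm (v - c)"
proof -
  obtain c where cpos: "c > 0" and cb: "\<And>a. c * (\<Sum>i\<in>A. \<bar>a i\<bar>) \<le> norm (\<Sum>i\<in>A. a i *\<^sub>R w i)"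
    using coeff_bound[OF fin ne inj ind] by blast
  define R where "R = 2 * norm v / c"
  define K where "K = (\<lambda>i. if i \<in> A then {0..R} else {0::real})"
  define L where "L = (\<lambda>a. \<Sum>i\<in>A. a i *\<^sub>R w i)"
  define T where "T = L ` Pi UNIV K"
  have cK: "compact (Pi UNIV K)" by (rule compact_box) (simp add: K_def)
  have contL: "continuous_on UNIV L"
    unfolding L_def by (intro continuous_intros continuous_on_product_coordinates)
  have cT: "compact T" unfolding T_def
    by (rule compact_continuous_image[OF continuous_on_subset[OF contL] cK]) auto
  have R0: "R \<ge> 0" using cpos by (simp add: R_def)
  have z: "(\<lambda>_. 0) \<in> Pi UNIV K" using R0 by (auto simp: K_def)
  have L0: "L (\<lambda>_. 0) = 0" by (simp add: L_def)
  have T0: "0 \<in> T" using z L0 unfolding T_def by (metis image_eqI)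
  then have neT: "T \<noteq> {}" by auto
  have TC: "T \<subseteq> C" by (auto simp: T_def C_def L_def K_def Pi_def split: if_splits)
  have contd: "continuous_on T (\<lambda>x. norm (v - x))" by (intro continuous_intros)
  obtain p where pT: "p \<in> T" and pmin: "\<And>x. x \<in> T \<Longrightarrow> norm (v - p) \<le> norm (v - x)"
    using continuous_attains_inf[OF cT neT contd] by blast
  have "norm (v - p) \<le> norm (v - q)" if qC: "q \<in> C" for q
  proof (rule ccontr)
    assume lt: "\<not> ?thesis"
    from qC obtain a where q: "q = L a" and a0: "\<forall>i\<in>A. a i \<ge> 0" by (auto simp: C_def L_def)
    define a' where "a' = (\<lambda>i. if i \<in> A then a i else 0)"
    have La: "L a' = L a" unfolding L_def a'_def by (intro sum.cong) auto
    have "norm (v - p) \<le> norm v" using pmin[OF T0] by simp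
    then have "norm (v - q) < norm v" using lt by simp
    then have nq: "norm q < 2 * norm v" using norm_triangle_ineq4[of v "v - q"] by simp
    have "c * (\<Sum>i\<in>A. \<bar>a' i\<bar>) \<le> norm q" using cb[of a'] La q by (simp add: L_def)
    then have sb: "(\<Sum>i\<in>A. \<bar>a' i\<bar>) \<le> R" using nq cpos by (simp add: R_def field_simps)
    have "a' i \<le> R" if "i \<in> A" for i
      using member_le_sum[of i A "\<lambda>i. \<bar>a' i\<bar>"] that fin sb by auto
    then have "a' \<in> Pi UNIV K" using a0 by (auto simp: K_def a'_def)
    then have "q \<in> T" using La q unfolding T_def by (metis image_eqI)
    then show False using pmin lt by blast
  qed
  then show ?thesis using pT TC by blast
qed

lemma nearest_unique:
  fixes v p q :: "'a::real_inner"
  assumes "p \<in> C" "q \<in> C" "(p + q) /\<^sub>R 2 \<in> C"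
    and "\<forall>c\<in>C. norm (v - p) \<le> norm (v - c)" "\<forall>c\<in>C. norm (v - q) \<le> norm (v - c)"
  shows "p = q"
proof -
  define m where "m = (p + q) /\<^sub>R 2"
  have e: "norm (v - p) = norm (v - q)" using assms by (meson order_antisym)
  have le: "norm (v - p) \<le> norm (v - m)" using assms m_def by auto
  have par: "(norm (v - m))\<^sup>2 = ((norm (v - p))\<^sup>2 + (norm (v - q))\<^sup>2) / 2 - (norm (p - q))\<^sup>2 / 4"
    unfolding m_def power2_norm_eq_inner
    by (simp add: inner_diff_left inner_diff_right inner_add_left inner_add_right inner_commute
        field_simps)
  have "(norm (v - p))\<^sup>2 \<le> (norm (v - m))\<^sup>2" using le by (simp add: power_mono)
  then have "(norm (p - q))\<^sup>2 \<le> 0" using par e by simp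
  then show ?thesis by simp
qed

theorem lemma2:
  fixes J :: "'a::{real_inner, complete_space} \<Rightarrow> real"
    and J' :: "'a \<Rightarrow> 'a"
    and I :: "'i set"
    and g :: "'i \<Rightarrow> 'a \<Rightarrow> real"
    and g' :: "'i \<Rightarrow> 'a \<Rightarrow> 'a"
  assumes "finite I"
    and "C1_grad J J'"
    and "\<forall>i\<in>I. C1_grad (g i) (g' i)"
    and "\<forall>v\<in>feasible I g. active I g v \<noteq> {} \<longrightarrow>
           inj_on (\<lambda>i. g' i v) (active I g v) \<and> independent ((\<lambda>i. g' i v) ` active I g v)"
    and "u \<in> feasible I g"
  shows "KKT_point I J' g g' u \<longleftrightarrow> dA I J' g g' u = 0"
proof -
  define A where "A = active I g u"
  define C where "C = active_cone I g g' u"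
  define v where "v = - J' u"
  have AI: "A \<subseteq> I" by (auto simp: A_def active_def)
  have finA: "finite A" using AI assms(1) finite_subset by blast
  have Cdef: "C = {(\<Sum>i\<in>A. a i *\<^sub>R g' i u) | a. \<forall>i\<in>A. a i \<ge> 0}"
    by (simp add: C_def A_def active_cone_def)
  have neg: "g i u < 0" if "i \<in> I" "i \<notin> A" for i
    using assms(5) that by (force simp: feasible_def A_def active_def)
  have K: "KKT_point I J' g g' u \<longleftrightarrow> v \<in> C"
  proof
    assume "KKT_point I J' g g' u"
    then obtain \<mu> where m0: "\<forall>i\<in>I. \<mu> i \<ge> 0" and vs: "v = (\<Sum>i\<in>I. \<mu> i *\<^sub>R g' i u)"
      and cs: "\<forall>i\<in>I. \<mu> i * g i u = 0" by (auto simp: KKT_point_def v_def)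
    have "(\<Sum>i\<in>I. \<mu> i *\<^sub>R g' i u) = (\<Sum>i\<in>A. \<mu> i *\<^sub>R g' i u)"
    proof (rule sum.mono_neutral_right[OF assms(1) AI])
      show "\<forall>i\<in>I - A. \<mu> i *\<^sub>R g' i u = 0"
        using cs neg by fastforce
    qed
    then show "v \<in> C" using vs m0 AI unfolding Cdef by blast
  next
    assume "v \<in> C"
    then obtain a where vs: "v = (\<Sum>i\<in>A. a i *\<^sub>R g' i u)" and a0: "\<forall>i\<in>A. a i \<ge> 0"
      unfolding Cdef by blast
    define \<mu> where "\<mu> = (\<lambda>i. if i \<in> A then a i else 0)"
    have "(\<Sum>i\<in>I. \<mu> i *\<^sub>R g' i u) = (\<Sum>i\<in>A. \<mu> i *\<^sub>R g' i u)"
      by (rule sum.mono_neutral_right[OF assms(1) AI]) (auto simp: \<mu>_def)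
    also have "\<dots> = v" unfolding vs by (intro sum.cong) (auto simp: \<mu>_def)
    finally have "- J' u = (\<Sum>i\<in>I. \<mu> i *\<^sub>R g' i u)" by (simp add: v_def)
    moreover have "\<forall>i\<in>I. \<mu> i \<ge> 0" using a0 by (auto simp: \<mu>_def)
    moreover have "\<forall>i\<in>I. \<mu> i * g i u = 0" by (auto simp: \<mu>_def A_def active_def)
    ultimately show "KKT_point I J' g g' u" using assms(5) unfolding KKT_point_def by blast
  qed
  have D: "dA I J' g g' u = 0 \<longleftrightarrow> proj C v = v"
    by (auto simp: dA_def C_def v_def)
  have P: "proj C v = v \<longleftrightarrow> v \<in> C"
  proof
    assume vC: "v \<in> C"
    show "proj C v = v" unfolding proj_def
    proof (rule the_equality)
      show "v \<in> C \<and> (\<forall>c\<in>C. norm (v - v) \<le> norm (v - c))" using vC by simp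
    next
      fix p assume "p \<in> C \<and> (\<forall>c\<in>C. norm (v - p) \<le> norm (v - c))"
      then have "norm (v - p) \<le> 0" using vC by fastforce
      then show "p = v" by simp
    qed
  next
    assume pv: "proj C v = v"
    show "v \<in> C"
    proof (cases "A = {}")
      case True
      then have C0: "C = {0}" by (simp add: Cdef)
      have "proj C v = 0" unfolding proj_def C0
        by (rule the_equality) auto
      then show ?thesis using pv C0 by simp
    next
      case False
      have ii: "inj_on (\<lambda>i. g' i u) A" "independent ((\<lambda>i. g' i u) ` A)"
        using assms(4,5) False by (auto simp: A_def)
      have ex: "\<exists>p\<in>C. \<forall>c\<in>C. norm (v - p) \<le> norm (v - c)"
        unfolding Cdef by (rule nearest_exists[OF finA False ii])
      have mid: "(p + q) /\<^sub>R 2 \<in> C" if pC: "p \<in> C" and qC: "q \<in> C" for p q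
      proof -
        obtain a where "p = (\<Sum>i\<in>A. a i *\<^sub>R g' i u)" "\<forall>i\<in>A. a i \<ge> 0" using pC Cdef by blast
        moreover obtain b where "q = (\<Sum>i\<in>A. b i *\<^sub>R g' i u)" "\<forall>i\<in>A. b i \<ge> 0" using qC Cdef by blast
        ultimately have "(p + q) /\<^sub>R 2 = (\<Sum>i\<in>A. ((a i + b i) / 2) *\<^sub>R g' i u)"
          "\<forall>i\<in>A. (a i + b i) / 2 \<ge> 0"
        proof -
          assume pa: "p = (\<Sum>i\<in>A. a i *\<^sub>R g' i u)" and a0: "\<forall>i\<in>A. a i \<ge> 0"
            and qb: "q = (\<Sum>i\<in>A. b i *\<^sub>R g' i u)" and b0: "\<forall>i\<in>A. b i \<ge> 0"
          have "(p + q) /\<^sub>R 2 = (\<Sum>i\<in>A. (1/2) *\<^sub>R (a i *\<^sub>R g' i u + b i *\<^sub>R g' i u))"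
            unfolding pa qb sum.distrib[symmetric] scaleR_sum_right[symmetric] by simp
          also have "\<dots> = (\<Sum>i\<in>A. ((a i + b i) / 2) *\<^sub>R g' i u)"
            by (intro sum.cong refl) (simp add: scaleR_add_left[symmetric])
          finally show "(p + q) /\<^sub>R 2 = (\<Sum>i\<in>A. ((a i + b i) / 2) *\<^sub>R g' i u)" .
          show "\<forall>i\<in>A. (a i + b i) / 2 \<ge> 0" using a0 b0 by auto
        qed
        then show ?thesis unfolding Cdef
          by (intro CollectI exI[where x="\<lambda>i. (a i + b i) / 2"]) simp
      qed
      have "\<exists>!p. p \<in> C \<and> (\<forall>c\<in>C. norm (v - p) \<le> norm (v - c))"
        using ex nearest_unique[of _ C _ v] mid by blast
      then have "proj C v \<in> C" unfolding proj_def by (rule theI'[THEN conjunct1])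
      then show ?thesis using pv by simp
    qed
  qed
  show ?thesis using K D P by simp
qed

end
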